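(* With the system $T = D_T\cup A\cup B$ defined below, both $T\setminus B = D_T\cup A$ and $T\setminus D_T = A\cup B$ are terminating.
   Context: A string rewriting system (SRS) $R$ over an alphabet $\Sigma$ is a set of pairs $\ell\to r$ of strings; it induces the rewrite relation $u\ell v\to_R urv$ ($u,v\in\Sigma^*$). $R$ is terminating if there is no infinite sequence $s_0\to_R s_1\to_R\cdots$. Alphabet: $\{0_2,1_2,0_3,1_3,2_3,\lhd,\rhd\}$ (formal symbols). $D_T=\{0_2\rhd\to\rhd,\ 1_2\rhd\to 2_3\rhd\}$; $A=\{0_20_3\to0_30_2,\ 0_21_3\to0_31_2,\ 0_22_3\to1_30_2,\ 1_20_3\to1_31_2,\ 1_21_3\to2_30_2,\ 1_22_3\to2_31_2\}$; $B=\{\lhd0_3\to\lhd1_2,\ \lhd1_3\to\lhd0_20_2,\ \lhd2_3\to\lhd0_21_2\}$; $T=D_T\cup A\cup B$. *)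

theory Defs
  imports Main
begin

datatype sym = Z2 | O2 | Z3 | O3 | T3 | Lhd | Rhd

type_synonym srs = "(sym list \<times> sym list) set"

definition rstep :: "srs \<Rightarrow> (sym list \<times> sym list) set" where
  "rstep R = {(u @ l @ v, u @ r @ v) | u l r v. (l, r) \<in> R}"

definition terminating :: "srs \<Rightarrow> bool" where
  "terminating R \<longleftrightarrow> \<not> (\<exists>s :: nat \<Rightarrow> sym list. \<forall>i. (s i, s (Suc i)) \<in> rstep R)"

definition D_T :: srs where
  "D_T = {([Z2, Rhd], [Rhd]), ([O2, Rhd], [T3, Rhd])}"

definition A_rules :: srs where
  "A_rules = {([Z2, Z3], [Z3, Z2]), ([Z2, O3], [Z3, O2]), ([Z2, T3], [O3, Z2]),
              ([O2, Z3], [O3, O2]), ([O2, O3], [T3, Z2]), ([O2, T3], [T3, O2])}"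

definition B_rules :: srs where
  "B_rules = {([Lhd, Z3], [Lhd, O2]), ([Lhd, O3], [Lhd, Z2, Z2]), ([Lhd, T3], [Lhd, Z2, O2])}"

definition T_sys :: srs where
  "T_sys = D_T \<union> A_rules \<union> B_rules"

end

theory Submission
  imports Defs
begin

definition is2 :: "sym \<Rightarrow> bool" where "is2 x \<longleftrightarrow> x = Z2 \<or> x = O2"
definition is3 :: "sym \<Rightarrow> bool" where "is3 x \<longleftrightarrow> x = Z3 \<or> x = O3 \<or> x = T3"
definition cnt2 :: "sym list \<Rightarrow> nat" where "cnt2 w = length (filter is2 w)"
definition cnt3 :: "sym list \<Rightarrow> nat" where "cnt3 w = length (filter is3 w)"

fun inv :: "sym list \<Rightarrow> nat" where
  "inv [] = 0"
| "inv (x # xs) = (if is2 x then cnt3 xs else 0) + inv xs"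

lemma inv_append: "inv (a @ b) = inv a + inv b + cnt2 a * cnt3 b"
  by (induction a) (auto simp: cnt2_def cnt3_def)

definition rel :: "(sym list \<times> sym list) set" where
  "rel = inv_image (less_than <*lex*> less_than) (\<lambda>w. (cnt2 w, inv w))"

definition rel3 :: "(sym list \<times> sym list) set" where
  "rel3 = inv_image (less_than <*lex*> less_than) (\<lambda>w. (cnt3 w, inv w))"

lemma step1: "(x, y) \<in> rstep (T_sys - B_rules) \<Longrightarrow> (y, x) \<in> rel"
  unfolding rstep_def rel_def
  by (auto simp: T_sys_def D_T_def A_rules_def B_rules_def inv_append cnt2_def cnt3_def is2_def is3_def algebra_simps)

lemma step2: "(x, y) \<in> rstep (T_sys - D_T) \<Longrightarrow> (y, x) \<in> rel3"
  unfolding rstep_def rel3_def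
  by (auto simp: T_sys_def D_T_def A_rules_def B_rules_def inv_append cnt2_def cnt3_def is2_def is3_def algebra_simps)

lemma term_of: 
  assumes "wf W" "\<And>x y. (x, y) \<in> rstep R \<Longrightarrow> (y, x) \<in> W"
  shows "terminating R"
  unfolding terminating_def
proof
  assume "\<exists>s :: nat \<Rightarrow> sym list. \<forall>i. (s i, s (Suc i)) \<in> rstep R"
  then obtain s :: "nat \<Rightarrow> sym list" where "\<forall>i. (s i, s (Suc i)) \<in> rstep R" by blast
  then have "\<forall>i. (s (Suc i), s i) \<in> W" using assms(2) by blast
  then show False using assms(1) by (simp add: wf_iff_no_infinite_down_chain) blast
qed

theorem mainTheorem4:
  shows "terminating (T_sys - B_rules) \<and> terminating (T_sys - D_T)"
proof
  show "terminating (T_sys - B_rules)"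
    by (rule term_of[OF _ step1]) (simp add: rel_def wf_lex_prod)
  show "terminating (T_sys - D_T)"
    by (rule term_of[OF _ step2]) (simp add: rel3_def wf_lex_prod)
qed

end
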